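(* Let $L:\mathcal{B}\to\mathcal{A}$ be left adjoint to $R:\mathcal{A}\to\mathcal{B}$ with unit $\eta$ and counit $\epsilon$. If $R$ is separable, then $(L,\epsilon L)$ is relatively projective as a right module functor on the monad $(RL,R\epsilon L,\eta)$.
   Context: For a right adjoint $R$, $R$ is separable iff there is a natural transformation $\sigma:\mathrm{Id}_{\mathcal{A}}\to LR$ with $\epsilon\circ\sigma=\mathrm{Id}$ (i.e. the counit is a split natural epimorphism). Given a monad $(Q,m,u)$ on $\mathcal{B}$, a right module functor on it is a pair $(W,\mu)$ with $W:\mathcal{B}\to\mathcal{A}$ a functor and $\mu:WQ\to W$ natural with $\mu\circ\mu Q=\mu\circ Wm$ and $\mu\circ Wu=\mathrm{Id}_W$. $(W,\mu)$ is relatively projective if there is a natural transformation $\gamma:W\to WQ$ with $\mu\circ\gamma=\mathrm{Id}_W$ and $Wm\circ\gamma Q=\gamma\circ\mu$. The pair $(L,\epsilon L)$ is a right module functor on $(RL,R\epsilon L,\eta)$. *)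

theory Defs
  imports Main
begin

record ('o,'m) cat =
  Ob  :: "'o set"
  Hom :: "'o \<Rightarrow> 'o \<Rightarrow> 'm set"
  cmp :: "'m \<Rightarrow> 'm \<Rightarrow> 'm"   (* cmp C g f = g \<circ> f *)
  ide :: "'o \<Rightarrow> 'm"

definition category :: "('o,'m) cat \<Rightarrow> bool" where
  "category C \<longleftrightarrow>
     (\<forall>x y. Hom C x y \<noteq> {} \<longrightarrow> x \<in> Ob C \<and> y \<in> Ob C) \<and>
     (\<forall>x\<in>Ob C. ide C x \<in> Hom C x x) \<and>
     (\<forall>x y z f g. f \<in> Hom C x y \<longrightarrow> g \<in> Hom C y z \<longrightarrow> cmp C g f \<in> Hom C x z) \<and>
     (\<forall>w x y z f g h. f \<in> Hom C w x \<longrightarrow> g \<in> Hom C x y \<longrightarrow> h \<in> Hom C y z \<longrightarrow>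
          cmp C h (cmp C g f) = cmp C (cmp C h g) f) \<and>
     (\<forall>x y f. f \<in> Hom C x y \<longrightarrow> cmp C (ide C y) f = f \<and> cmp C f (ide C x) = f)"

definition "functor" :: "('o,'m) cat \<Rightarrow> ('p,'n) cat \<Rightarrow> ('o \<Rightarrow> 'p) \<Rightarrow> ('m \<Rightarrow> 'n) \<Rightarrow> bool" where
  "functor C D Fo Fm \<longleftrightarrow>
     (\<forall>x\<in>Ob C. Fo x \<in> Ob D) \<and>
     (\<forall>x y f. f \<in> Hom C x y \<longrightarrow> Fm f \<in> Hom D (Fo x) (Fo y)) \<and>
     (\<forall>x\<in>Ob C. Fm (ide C x) = ide D (Fo x)) \<and>
     (\<forall>x y z f g. f \<in> Hom C x y \<longrightarrow> g \<in> Hom C y z \<longrightarrow> Fm (cmp C g f) = cmp D (Fm g) (Fm f))"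

definition nat_trans ::
  "('o,'m) cat \<Rightarrow> ('p,'n) cat \<Rightarrow> ('o \<Rightarrow> 'p) \<Rightarrow> ('m \<Rightarrow> 'n) \<Rightarrow> ('o \<Rightarrow> 'p) \<Rightarrow> ('m \<Rightarrow> 'n)
     \<Rightarrow> ('o \<Rightarrow> 'n) \<Rightarrow> bool" where
  "nat_trans C D Fo Fm Go Gm \<tau> \<longleftrightarrow>
     functor C D Fo Fm \<and> functor C D Go Gm \<and>
     (\<forall>x\<in>Ob C. \<tau> x \<in> Hom D (Fo x) (Go x)) \<and>
     (\<forall>x y f. f \<in> Hom C x y \<longrightarrow> cmp D (Gm f) (\<tau> x) = cmp D (\<tau> y) (Fm f))"

definition adjunction ::
  "('a,'am) cat \<Rightarrow> ('b,'bm) cat \<Rightarrow> ('b \<Rightarrow> 'a) \<Rightarrow> ('bm \<Rightarrow> 'am) \<Rightarrow> ('a \<Rightarrow> 'b) \<Rightarrow> ('am \<Rightarrow> 'bm)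
     \<Rightarrow> ('b \<Rightarrow> 'bm) \<Rightarrow> ('a \<Rightarrow> 'am) \<Rightarrow> bool" where
  "adjunction A B Lo Lm Ro Rm \<eta> \<epsilon> \<longleftrightarrow>
     category A \<and> category B \<and>
     functor B A Lo Lm \<and> functor A B Ro Rm \<and>
     nat_trans B B id id (Ro \<circ> Lo) (Rm \<circ> Lm) \<eta> \<and>
     nat_trans A A (Lo \<circ> Ro) (Lm \<circ> Rm) id id \<epsilon> \<and>
     (\<forall>b\<in>Ob B. cmp A (\<epsilon> (Lo b)) (Lm (\<eta> b)) = ide A (Lo b)) \<and>
     (\<forall>a\<in>Ob A. cmp B (Rm (\<epsilon> a)) (\<eta> (Ro a)) = ide B (Ro a))"

text \<open>Separable functor (Nastasescu--Van den Bergh--Van Oystaeyen):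
  \<open>F : C \<rightarrow> D\<close> is separable if there are maps
  \<open>P_{x,y} : Hom_D(Fx,Fy) \<rightarrow> Hom_C(x,y)\<close>, natural in \<open>x\<close> and \<open>y\<close>,
  with \<open>P_{x,y}(F f) = f\<close>.\<close>
definition separable :: "('o,'m) cat \<Rightarrow> ('p,'n) cat \<Rightarrow> ('o \<Rightarrow> 'p) \<Rightarrow> ('m \<Rightarrow> 'n) \<Rightarrow> bool" where
  "separable C D Fo Fm \<longleftrightarrow> functor C D Fo Fm \<and>
     (\<exists>P :: 'o \<Rightarrow> 'o \<Rightarrow> 'n \<Rightarrow> 'm.
        (\<forall>x\<in>Ob C. \<forall>y\<in>Ob C. \<forall>h \<in> Hom D (Fo x) (Fo y). P x y h \<in> Hom C x y) \<and>
        (\<forall>x y f. f \<in> Hom C x y \<longrightarrow> P x y (Fm f) = f) \<and>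
        (\<forall>x x' y y' f' g h. f' \<in> Hom C x' x \<longrightarrow> g \<in> Hom C y y' \<longrightarrow> h \<in> Hom D (Fo x) (Fo y) \<longrightarrow>
            P x' y' (cmp D (Fm g) (cmp D h (Fm f'))) = cmp C g (cmp C (P x y h) f')))"

definition monad :: "('b,'bm) cat \<Rightarrow> ('b \<Rightarrow> 'b) \<Rightarrow> ('bm \<Rightarrow> 'bm) \<Rightarrow> ('b \<Rightarrow> 'bm) \<Rightarrow> ('b \<Rightarrow> 'bm) \<Rightarrow> bool" where
  "monad B Qo Qm m u \<longleftrightarrow>
     category B \<and> functor B B Qo Qm \<and>
     nat_trans B B (Qo \<circ> Qo) (Qm \<circ> Qm) Qo Qm m \<and>
     nat_trans B B id id Qo Qm u \<and>
     (\<forall>b\<in>Ob B. cmp B (m b) (Qm (m b)) = cmp B (m b) (m (Qo b))) \<and>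
     (\<forall>b\<in>Ob B. cmp B (m b) (Qm (u b)) = ide B (Qo b)) \<and>
     (\<forall>b\<in>Ob B. cmp B (m b) (u (Qo b)) = ide B (Qo b))"

definition right_module_functor ::
  "('a,'am) cat \<Rightarrow> ('b,'bm) cat \<Rightarrow> ('b \<Rightarrow> 'b) \<Rightarrow> ('bm \<Rightarrow> 'bm) \<Rightarrow> ('b \<Rightarrow> 'bm) \<Rightarrow> ('b \<Rightarrow> 'bm)
     \<Rightarrow> ('b \<Rightarrow> 'a) \<Rightarrow> ('bm \<Rightarrow> 'am) \<Rightarrow> ('b \<Rightarrow> 'am) \<Rightarrow> bool" where
  "right_module_functor A B Qo Qm m u Wo Wm \<mu> \<longleftrightarrow>
     category A \<and> monad B Qo Qm m u \<and> functor B A Wo Wm \<and>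
     nat_trans B A (Wo \<circ> Qo) (Wm \<circ> Qm) Wo Wm \<mu> \<and>
     (\<forall>b\<in>Ob B. cmp A (\<mu> b) (\<mu> (Qo b)) = cmp A (\<mu> b) (Wm (m b))) \<and>
     (\<forall>b\<in>Ob B. cmp A (\<mu> b) (Wm (u b)) = ide A (Wo b))"

definition relatively_projective ::
  "('a,'am) cat \<Rightarrow> ('b,'bm) cat \<Rightarrow> ('b \<Rightarrow> 'b) \<Rightarrow> ('bm \<Rightarrow> 'bm) \<Rightarrow> ('b \<Rightarrow> 'bm) \<Rightarrow> ('b \<Rightarrow> 'bm)
     \<Rightarrow> ('b \<Rightarrow> 'a) \<Rightarrow> ('bm \<Rightarrow> 'am) \<Rightarrow> ('b \<Rightarrow> 'am) \<Rightarrow> bool" where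
  "relatively_projective A B Qo Qm m u Wo Wm \<mu> \<longleftrightarrow>
     right_module_functor A B Qo Qm m u Wo Wm \<mu> \<and>
     (\<exists>\<gamma>. nat_trans B A Wo Wm (Wo \<circ> Qo) (Wm \<circ> Qm) \<gamma> \<and>
          (\<forall>b\<in>Ob B. cmp A (\<mu> b) (\<gamma> b) = ide A (Wo b)) \<and>
          (\<forall>b\<in>Ob B. cmp A (Wm (m b)) (\<gamma> (Qo b)) = cmp A (\<gamma> b) (\<mu> b)))"

end

theory Submission
  imports Defs
begin

lemma functor_comp:
  assumes "functor C D F G" "functor D E H K"
  shows "functor C E (H \<circ> F) (K \<circ> G)"
  using assms unfolding functor_def by (auto; metis)

theorem lemma1p15:
  fixes A :: "('a,'am) cat" and B :: "('b,'bm) cat"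
    and Lo :: "'b \<Rightarrow> 'a" and Lm :: "'bm \<Rightarrow> 'am"
    and Ro :: "'a \<Rightarrow> 'b" and Rm :: "'am \<Rightarrow> 'bm"
    and \<eta> :: "'b \<Rightarrow> 'bm" and \<epsilon> :: "'a \<Rightarrow> 'am"
  assumes "adjunction A B Lo Lm Ro Rm \<eta> \<epsilon>"
    and "separable A B Ro Rm"
  shows "relatively_projective A B (Ro \<circ> Lo) (Rm \<circ> Lm) (\<lambda>b. Rm (\<epsilon> (Lo b))) \<eta>
           Lo Lm (\<lambda>b. \<epsilon> (Lo b))"
proof -
  have cA: "category A" and cB: "category B" and fL: "functor B A Lo Lm" and fR: "functor A B Ro Rm"
    and etaN: "nat_trans B B id id (Ro \<circ> Lo) (Rm \<circ> Lm) \<eta>"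
    and epsN: "nat_trans A A (Lo \<circ> Ro) (Lm \<circ> Rm) id id \<epsilon>"
    and tri1: "\<And>b. b \<in> Ob B \<Longrightarrow> cmp A (\<epsilon> (Lo b)) (Lm (\<eta> b)) = ide A (Lo b)"
    and tri2: "\<And>a. a \<in> Ob A \<Longrightarrow> cmp B (Rm (\<epsilon> a)) (\<eta> (Ro a)) = ide B (Ro a)"
    using assms(1) unfolding adjunction_def by auto
  obtain P :: "'a \<Rightarrow> 'a \<Rightarrow> 'bm \<Rightarrow> 'am" where
    Phom: "\<And>x y h. x \<in> Ob A \<Longrightarrow> y \<in> Ob A \<Longrightarrow> h \<in> Hom B (Ro x) (Ro y) \<Longrightarrow> P x y h \<in> Hom A x y"
    and Pid: "\<And>x y f. f \<in> Hom A x y \<Longrightarrow> P x y (Rm f) = f"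
    and Pnat: "\<And>x x' y y' f' g h. f' \<in> Hom A x' x \<Longrightarrow> g \<in> Hom A y y' \<Longrightarrow> h \<in> Hom B (Ro x) (Ro y) \<Longrightarrow>
            P x' y' (cmp B (Rm g) (cmp B h (Rm f'))) = cmp A g (cmp A (P x y h) f')"
    using assms(2) unfolding separable_def by (elim conjE exE) (rule that, blast+)
  note cAd = cA[unfolded category_def] and cBd = cB[unfolded category_def]
  have Aob: "\<And>x y f. f \<in> Hom A x y \<Longrightarrow> x \<in> Ob A \<and> y \<in> Ob A" using cAd by blast
  have Bob: "\<And>x y f. f \<in> Hom B x y \<Longrightarrow> x \<in> Ob B \<and> y \<in> Ob B" using cBd by blast
  have Aid: "\<And>x. x \<in> Ob A \<Longrightarrow> ide A x \<in> Hom A x x" using cAd by blast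
  have Bid: "\<And>x. x \<in> Ob B \<Longrightarrow> ide B x \<in> Hom B x x" using cBd by blast
  have Acmp: "\<And>x y z f g. f \<in> Hom A x y \<Longrightarrow> g \<in> Hom A y z \<Longrightarrow> cmp A g f \<in> Hom A x z" using cAd by blast
  have Bcmp: "\<And>x y z f g. f \<in> Hom B x y \<Longrightarrow> g \<in> Hom B y z \<Longrightarrow> cmp B g f \<in> Hom B x z" using cBd by blast
  have Aass: "\<And>w x y z f g h. f \<in> Hom A w x \<Longrightarrow> g \<in> Hom A x y \<Longrightarrow> h \<in> Hom A y z \<Longrightarrow>
          cmp A h (cmp A g f) = cmp A (cmp A h g) f" using cAd by blast
  have AidL: "\<And>x y f. f \<in> Hom A x y \<Longrightarrow> cmp A (ide A y) f = f" using cAd by blast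
  have AidR: "\<And>x y f. f \<in> Hom A x y \<Longrightarrow> cmp A f (ide A x) = f" using cAd by blast
  have BidL: "\<And>x y f. f \<in> Hom B x y \<Longrightarrow> cmp B (ide B y) f = f" using cBd by blast
  have BidR: "\<And>x y f. f \<in> Hom B x y \<Longrightarrow> cmp B f (ide B x) = f" using cBd by blast
  note fLd = fL[unfolded functor_def] and fRd = fR[unfolded functor_def]
  have Lob: "\<And>x. x \<in> Ob B \<Longrightarrow> Lo x \<in> Ob A" using fLd by blast
  have Rob: "\<And>x. x \<in> Ob A \<Longrightarrow> Ro x \<in> Ob B" using fRd by blast
  have Lhom: "\<And>x y f. f \<in> Hom B x y \<Longrightarrow> Lm f \<in> Hom A (Lo x) (Lo y)" using fLd by blast
  have Rhom: "\<And>x y f. f \<in> Hom A x y \<Longrightarrow> Rm f \<in> Hom B (Ro x) (Ro y)" using fRd by blast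
  have Lid: "\<And>x. x \<in> Ob B \<Longrightarrow> Lm (ide B x) = ide A (Lo x)" using fLd by blast
  have Rid: "\<And>x. x \<in> Ob A \<Longrightarrow> Rm (ide A x) = ide B (Ro x)" using fRd by blast
  have Lc: "\<And>x y z f g. f \<in> Hom B x y \<Longrightarrow> g \<in> Hom B y z \<Longrightarrow> Lm (cmp B g f) = cmp A (Lm g) (Lm f)" using fLd by blast
  have Rc: "\<And>x y z f g. f \<in> Hom A x y \<Longrightarrow> g \<in> Hom A y z \<Longrightarrow> Rm (cmp A g f) = cmp B (Rm g) (Rm f)" using fRd by blast
  have etah: "\<And>b. b \<in> Ob B \<Longrightarrow> \<eta> b \<in> Hom B b (Ro (Lo b))" using etaN unfolding nat_trans_def by auto
  have etan: "\<And>x y f. f \<in> Hom B x y \<Longrightarrow> cmp B (Rm (Lm f)) (\<eta> x) = cmp B (\<eta> y) f"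
    using etaN unfolding nat_trans_def by auto
  have epsh: "\<And>a. a \<in> Ob A \<Longrightarrow> \<epsilon> a \<in> Hom A (Lo (Ro a)) a" using epsN unfolding nat_trans_def by auto
  have epsn: "\<And>x y f. f \<in> Hom A x y \<Longrightarrow> cmp A f (\<epsilon> x) = cmp A (\<epsilon> y) (Lm (Rm f))"
    using epsN unfolding nat_trans_def by auto
  define \<sigma> where "\<sigma> a = P a (Lo (Ro a)) (\<eta> (Ro a))" for a
  have sh: "\<sigma> a \<in> Hom A a (Lo (Ro a))" if "a \<in> Ob A" for a
    unfolding \<sigma>_def using that by (intro Phom) (auto intro: Lob Rob etah)
  have sid: "cmp A (\<epsilon> a) (\<sigma> a) = ide A a" if a: "a \<in> Ob A" for a
  proof -
    have h: "\<eta> (Ro a) \<in> Hom B (Ro a) (Ro (Lo (Ro a)))" using etah Rob a by blast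
    have "P a a (cmp B (Rm (\<epsilon> a)) (cmp B (\<eta> (Ro a)) (Rm (ide A a)))) = cmp A (\<epsilon> a) (cmp A (\<sigma> a) (ide A a))"
      unfolding \<sigma>_def by (rule Pnat[OF Aid[OF a] epsh[OF a] h])
    moreover have "cmp B (Rm (\<epsilon> a)) (cmp B (\<eta> (Ro a)) (Rm (ide A a))) = Rm (ide A a)"
      using Rid[OF a] BidR[OF h] tri2[OF a] by simp
    ultimately show ?thesis using Pid[OF Aid[OF a]] AidR[OF sh[OF a]] by simp
  qed
  have sn: "cmp A (Lm (Rm f)) (\<sigma> a) = cmp A (\<sigma> a') f" if f: "f \<in> Hom A a a'" for f a a'
  proof -
    have a: "a \<in> Ob A" and a': "a' \<in> Ob A" using Aob f by auto
    have h: "\<eta> (Ro a) \<in> Hom B (Ro a) (Ro (Lo (Ro a)))" using etah Rob a by blast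
    have h': "\<eta> (Ro a') \<in> Hom B (Ro a') (Ro (Lo (Ro a')))" using etah Rob a' by blast
    have Rf: "Rm f \<in> Hom B (Ro a) (Ro a')" using Rhom f by blast
    have LRf: "Lm (Rm f) \<in> Hom A (Lo (Ro a)) (Lo (Ro a'))" using Lhom Rf by blast
    have e1: "P a (Lo (Ro a')) (cmp B (Rm (Lm (Rm f))) (cmp B (\<eta> (Ro a)) (Rm (ide A a))))
        = cmp A (Lm (Rm f)) (cmp A (\<sigma> a) (ide A a))"
      unfolding \<sigma>_def by (rule Pnat[OF Aid[OF a] LRf h])
    have LRa': "Lo (Ro a') \<in> Ob A" using Lob Rob a' by blast
    have e2: "P a (Lo (Ro a')) (cmp B (Rm (ide A (Lo (Ro a')))) (cmp B (\<eta> (Ro a')) (Rm f)))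
        = cmp A (ide A (Lo (Ro a'))) (cmp A (\<sigma> a') f)"
      unfolding \<sigma>_def by (rule Pnat[OF f Aid[OF LRa'] h'])
    have "cmp B (Rm (Lm (Rm f))) (cmp B (\<eta> (Ro a)) (Rm (ide A a))) = cmp B (\<eta> (Ro a')) (Rm f)"
      using Rid[OF a] BidR[OF h] etan[OF Rf] by simp
    moreover have "cmp B (Rm (ide A (Lo (Ro a')))) (cmp B (\<eta> (Ro a')) (Rm f)) = cmp B (\<eta> (Ro a')) (Rm f)"
      using Rid[OF LRa'] BidL[OF Bcmp[OF Rf h']] by simp
    ultimately show ?thesis using e1 e2 AidR[OF sh[OF a]] AidL[OF Acmp[OF f sh[OF a']]] by simp
  qed
  have fRL: "functor B B (Ro \<circ> Lo) (Rm \<circ> Lm)" by (rule functor_comp[OF fL fR])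
  have fLRL: "functor B A (Lo \<circ> (Ro \<circ> Lo)) (Lm \<circ> (Rm \<circ> Lm))" by (rule functor_comp[OF fRL fL])
  have fRLRL: "functor B B ((Ro \<circ> Lo) \<circ> (Ro \<circ> Lo)) ((Rm \<circ> Lm) \<circ> (Rm \<circ> Lm))" by (rule functor_comp[OF fRL fRL])
  have LRL_ob: "\<And>b. b \<in> Ob B \<Longrightarrow> Lo (Ro (Lo b)) \<in> Ob A" using Lob Rob by blast
  have mon: "monad B (Ro \<circ> Lo) (Rm \<circ> Lm) (\<lambda>b. Rm (\<epsilon> (Lo b))) \<eta>"
    unfolding monad_def
  proof (intro conjI ballI)
    show "nat_trans B B ((Ro \<circ> Lo) \<circ> (Ro \<circ> Lo)) ((Rm \<circ> Lm) \<circ> (Rm \<circ> Lm)) (Ro \<circ> Lo) (Rm \<circ> Lm) (\<lambda>b. Rm (\<epsilon> (Lo b)))"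
      unfolding nat_trans_def
    proof (intro conjI allI impI ballI fRLRL fRL)
      fix x assume "x \<in> Ob B" thus "Rm (\<epsilon> (Lo x)) \<in> Hom B (((Ro \<circ> Lo) \<circ> (Ro \<circ> Lo)) x) ((Ro \<circ> Lo) x)"
        using Rhom epsh Lob by auto
    next
      fix x y f assume f: "f \<in> Hom B x y"
      have Lf: "Lm f \<in> Hom A (Lo x) (Lo y)" using Lhom f by blast
      have x: "x \<in> Ob B" and y: "y \<in> Ob B" using Bob f by auto
      show "cmp B ((Rm \<circ> Lm) f) (Rm (\<epsilon> (Lo x))) = cmp B (Rm (\<epsilon> (Lo y))) (((Rm \<circ> Lm) \<circ> (Rm \<circ> Lm)) f)"
        using Rc[OF epsh[OF Lob[OF x]] Lf] Rc[OF Lhom[OF Rhom[OF Lf]] epsh[OF Lob[OF y]]] epsn[OF Lf] by simp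
    qed
  next
    fix b assume b: "b \<in> Ob B"
    have e: "\<epsilon> (Lo b) \<in> Hom A (Lo (Ro (Lo b))) (Lo b)" using epsh Lob b by blast
    show "cmp B (Rm (\<epsilon> (Lo b))) ((Rm \<circ> Lm) (Rm (\<epsilon> (Lo b)))) = cmp B (Rm (\<epsilon> (Lo b))) (Rm (\<epsilon> (Lo ((Ro \<circ> Lo) b))))"
      using Rc[OF Lhom[OF Rhom[OF e]] e] Rc[OF epsh[OF LRL_ob[OF b]] e] epsn[OF e] by simp
  next
    fix b assume b: "b \<in> Ob B"
    show "cmp B (Rm (\<epsilon> (Lo b))) ((Rm \<circ> Lm) (\<eta> b)) = ide B ((Ro \<circ> Lo) b)"
      using Rc[OF Lhom[OF etah[OF b]] epsh[OF Lob[OF b]]] tri1[OF b] Rid[OF Lob[OF b]] by simp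
  next
    fix b assume b: "b \<in> Ob B"
    show "cmp B (Rm (\<epsilon> (Lo b))) (\<eta> ((Ro \<circ> Lo) b)) = ide B ((Ro \<circ> Lo) b)"
      using tri2[OF Lob[OF b]] by simp
  qed (use cB fRL etaN in auto)
  have rmf: "right_module_functor A B (Ro \<circ> Lo) (Rm \<circ> Lm) (\<lambda>b. Rm (\<epsilon> (Lo b))) \<eta> Lo Lm (\<lambda>b. \<epsilon> (Lo b))"
    unfolding right_module_functor_def
  proof (intro conjI ballI cA mon fL)
    show "nat_trans B A (Lo \<circ> (Ro \<circ> Lo)) (Lm \<circ> (Rm \<circ> Lm)) Lo Lm (\<lambda>b. \<epsilon> (Lo b))"
      unfolding nat_trans_def
    proof (intro conjI allI impI ballI fLRL fL)
      fix x assume "x \<in> Ob B" thus "\<epsilon> (Lo x) \<in> Hom A ((Lo \<circ> (Ro \<circ> Lo)) x) (Lo x)"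
        using epsh Lob by auto
    next
      fix x y f assume f: "f \<in> Hom B x y"
      show "cmp A (Lm f) (\<epsilon> (Lo x)) = cmp A (\<epsilon> (Lo y)) ((Lm \<circ> (Rm \<circ> Lm)) f)"
        using epsn[OF Lhom[OF f]] by simp
    qed
  next
    fix b assume b: "b \<in> Ob B"
    have e: "\<epsilon> (Lo b) \<in> Hom A (Lo (Ro (Lo b))) (Lo b)" using epsh Lob b by blast
    show "cmp A (\<epsilon> (Lo b)) (\<epsilon> (Lo ((Ro \<circ> Lo) b))) = cmp A (\<epsilon> (Lo b)) (Lm (Rm (\<epsilon> (Lo b))))"
      using epsn[OF e] by simp
  next
    fix b assume b: "b \<in> Ob B"
    show "cmp A (\<epsilon> (Lo b)) (Lm (\<eta> b)) = ide A (Lo b)" using tri1[OF b] .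
  qed
  show ?thesis
    unfolding relatively_projective_def
  proof (intro conjI rmf exI[of _ "\<lambda>b. \<sigma> (Lo b)"])
    show "nat_trans B A Lo Lm (Lo \<circ> (Ro \<circ> Lo)) (Lm \<circ> (Rm \<circ> Lm)) (\<lambda>b. \<sigma> (Lo b))"
      unfolding nat_trans_def
    proof (intro conjI allI impI ballI fLRL fL)
      fix x assume "x \<in> Ob B" thus "\<sigma> (Lo x) \<in> Hom A (Lo x) ((Lo \<circ> (Ro \<circ> Lo)) x)"
        using sh Lob by auto
    next
      fix x y f assume f: "f \<in> Hom B x y"
      show "cmp A ((Lm \<circ> (Rm \<circ> Lm)) f) (\<sigma> (Lo x)) = cmp A (\<sigma> (Lo y)) (Lm f)"
        using sn[OF Lhom[OF f]] by simp
    qed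
    show "\<forall>b\<in>Ob B. cmp A (\<epsilon> (Lo b)) (\<sigma> (Lo b)) = ide A (Lo b)"
      using sid Lob by blast
    show "\<forall>b\<in>Ob B. cmp A (Lm (Rm (\<epsilon> (Lo b)))) (\<sigma> (Lo ((Ro \<circ> Lo) b))) = cmp A (\<sigma> (Lo b)) (\<epsilon> (Lo b))"
    proof
      fix b assume b: "b \<in> Ob B"
      have e: "\<epsilon> (Lo b) \<in> Hom A (Lo (Ro (Lo b))) (Lo b)" using epsh Lob b by blast
      show "cmp A (Lm (Rm (\<epsilon> (Lo b)))) (\<sigma> (Lo ((Ro \<circ> Lo) b))) = cmp A (\<sigma> (Lo b)) (\<epsilon> (Lo b))"
        using sn[OF e] by simp
    qed
  qed
qed

end
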